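(* Let $d\sigma^2$ be an admissible positive semi-definite metric on a $2$-manifold $M^2$ and let $p$ be an intrinsic cross cap of $d\sigma^2$. Then $p$ is an isolated singular point of $d\sigma^2$, and the null space $\mathcal{N}_p$ is one-dimensional.
   Context: For a smooth positive semi-definite metric $d\sigma^2$ with $\langle\cdot,\cdot\rangle=d\sigma^2$: singular points are where it is not positive definite; $\mathcal{N}_p=\{v\in T_pM^2: d\sigma^2(v,w)=0\ \forall w\}$; the Kossowski pseudo-connection is $\Gamma(X,Y,Z)=\tfrac12\bigl(X\langle Y,Z\rangle+Y\langle X,Z\rangle-Z\langle X,Y\rangle+\langle[X,Y],Z\rangle-\langle[X,Z],Y\rangle-\langle[Y,Z],X\rangle\bigr)$; admissible: at each singular point $p$, $\Gamma(V_1,V_2,V_3)(p)=0$ whenever $V_3(p)\in\mathcal{N}_p$. A singular point $p$ of an admissible metric is an intrinsic cross cap if, in a local coordinate system $(u,v)$ centered at $p$ with $d\sigma^2=E\,du^2+2F\,du\,dv+G\,dv^2$ and $\delta:=EG-F^2$, the Hessian determinant $\delta_{uu}\delta_{vv}-\delta_{uv}^2$ does not vanish at $p$ (this is independent of the coordinates). *)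

theory Defs
  imports "HOL-Analysis.Analysis"
begin

text \<open>Everything is expressed in a local coordinate chart (u,v) ranging over an open set
  U of the plane; points are pairs (u,v) :: real \<times> real.\<close>

fun C_k_on :: "nat \<Rightarrow> (real \<times> real) set \<Rightarrow> (real \<times> real \<Rightarrow> 'b::real_normed_vector) \<Rightarrow> bool" where
  "C_k_on 0 U f = continuous_on U f"
| "C_k_on (Suc k) U f = (f differentiable_on U \<and>
      (\<forall>w. C_k_on k U (\<lambda>q. frechet_derivative f (at q) w)))"

definition smooth_on :: "(real \<times> real) set \<Rightarrow> (real \<times> real \<Rightarrow> 'b::real_normed_vector) \<Rightarrow> bool" where
  "smooth_on U f \<longleftrightarrow> (\<forall>k. C_k_on k U f)"

definition metric_form ::
  "(real \<times> real \<Rightarrow> real) \<Rightarrow> (real \<times> real \<Rightarrow> real) \<Rightarrow> (real \<times> real \<Rightarrow> real)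
   \<Rightarrow> real \<times> real \<Rightarrow> real \<times> real \<Rightarrow> real \<times> real \<Rightarrow> real" where
  "metric_form E F G q x y =
     E q * fst x * fst y + F q * (fst x * snd y + snd x * fst y) + G q * snd x * snd y"

definition smooth_psd_metric ::
  "(real \<times> real) set \<Rightarrow> (real \<times> real \<Rightarrow> real) \<Rightarrow> (real \<times> real \<Rightarrow> real) \<Rightarrow> (real \<times> real \<Rightarrow> real) \<Rightarrow> bool" where
  "smooth_psd_metric U E F G \<longleftrightarrow> open U \<and> smooth_on U E \<and> smooth_on U F \<and> smooth_on U G \<and>
     (\<forall>q\<in>U. \<forall>w. metric_form E F G q w w \<ge> 0)"

definition singular_point ::
  "(real \<times> real \<Rightarrow> real) \<Rightarrow> (real \<times> real \<Rightarrow> real) \<Rightarrow> (real \<times> real \<Rightarrow> real) \<Rightarrow> real \<times> real \<Rightarrow> bool" where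
  "singular_point E F G q \<longleftrightarrow> \<not> (\<forall>w. w \<noteq> 0 \<longrightarrow> metric_form E F G q w w > 0)"

definition null_space ::
  "(real \<times> real \<Rightarrow> real) \<Rightarrow> (real \<times> real \<Rightarrow> real) \<Rightarrow> (real \<times> real \<Rightarrow> real) \<Rightarrow> real \<times> real \<Rightarrow> (real \<times> real) set" where
  "null_space E F G q = {v. \<forall>w. metric_form E F G q v w = 0}"

definition dirderiv :: "(real \<times> real \<Rightarrow> real \<times> real) \<Rightarrow> (real \<times> real \<Rightarrow> real) \<Rightarrow> real \<times> real \<Rightarrow> real" where
  "dirderiv X h p = frechet_derivative h (at p) (X p)"

definition lie_bracket ::
  "(real \<times> real \<Rightarrow> real \<times> real) \<Rightarrow> (real \<times> real \<Rightarrow> real \<times> real) \<Rightarrow> real \<times> real \<Rightarrow> real \<times> real" where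
  "lie_bracket X Y p = frechet_derivative Y (at p) (X p) - frechet_derivative X (at p) (Y p)"

definition kossowski ::
  "(real \<times> real \<Rightarrow> real) \<Rightarrow> (real \<times> real \<Rightarrow> real) \<Rightarrow> (real \<times> real \<Rightarrow> real) \<Rightarrow>
   (real \<times> real \<Rightarrow> real \<times> real) \<Rightarrow> (real \<times> real \<Rightarrow> real \<times> real) \<Rightarrow> (real \<times> real \<Rightarrow> real \<times> real)
   \<Rightarrow> real \<times> real \<Rightarrow> real" where
  "kossowski E F G X Y Z p =
    (let ip = (\<lambda>A B q. metric_form E F G q (A q) (B q)); g = metric_form E F G p in
     (1/2) * (dirderiv X (ip Y Z) p + dirderiv Y (ip X Z) p - dirderiv Z (ip X Y) p
        + g (lie_bracket X Y p) (Z p) - g (lie_bracket X Z p) (Y p) - g (lie_bracket Y Z p) (X p)))"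

definition admissible ::
  "(real \<times> real) set \<Rightarrow> (real \<times> real \<Rightarrow> real) \<Rightarrow> (real \<times> real \<Rightarrow> real) \<Rightarrow> (real \<times> real \<Rightarrow> real) \<Rightarrow> bool" where
  "admissible U E F G \<longleftrightarrow>
     (\<forall>p\<in>U. singular_point E F G p \<longrightarrow>
        (\<forall>V1 V2 V3. smooth_on U V1 \<longrightarrow> smooth_on U V2 \<longrightarrow> smooth_on U V3 \<longrightarrow>
           V3 p \<in> null_space E F G p \<longrightarrow> kossowski E F G V1 V2 V3 p = 0))"

definition partial_u :: "(real \<times> real \<Rightarrow> real) \<Rightarrow> real \<times> real \<Rightarrow> real" where
  "partial_u f q = frechet_derivative f (at q) (1, 0)"

definition partial_v :: "(real \<times> real \<Rightarrow> real) \<Rightarrow> real \<times> real \<Rightarrow> real" where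
  "partial_v f q = frechet_derivative f (at q) (0, 1)"

definition intrinsic_cross_cap ::
  "(real \<times> real) set \<Rightarrow> (real \<times> real \<Rightarrow> real) \<Rightarrow> (real \<times> real \<Rightarrow> real) \<Rightarrow> (real \<times> real \<Rightarrow> real) \<Rightarrow> real \<times> real \<Rightarrow> bool" where
  "intrinsic_cross_cap U E F G p \<longleftrightarrow> p \<in> U \<and> singular_point E F G p \<and>
     (let \<delta> = (\<lambda>q. E q * G q - (F q)\<^sup>2) in
        partial_u (partial_u \<delta>) p * partial_v (partial_v \<delta>) p - (partial_u (partial_v \<delta>) p)\<^sup>2 \<noteq> 0)"

end

theory Submission
  imports Defs
begin

lemma mf_simp: "metric_form E F G q (x1,x2) (y1,y2) = E q * x1 * y1 + F q * (x1*y2 + x2*y1) + G q * x2 * y2"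
  by (simp add: metric_form_def)

lemma psd_pt:
  assumes "\<forall>w. metric_form E F G q w w \<ge> 0"
  shows "E q \<ge> 0 \<and> G q \<ge> 0 \<and> E q * G q - (F q)\<^sup>2 \<ge> 0"
proof -
  have a: "E q \<ge> 0" using assms[rule_format, of "(1,0)"] by (simp add: mf_simp)
  have b: "G q \<ge> 0" using assms[rule_format, of "(0,1)"] by (simp add: mf_simp)
  have c: "E q * (E q * G q - (F q)\<^sup>2) \<ge> 0" using assms[rule_format, of "(F q, - E q)"]
    by (simp add: mf_simp power2_eq_square algebra_simps)
  have d: "G q * (E q * G q - (F q)\<^sup>2) \<ge> 0" using assms[rule_format, of "(G q, - F q)"]
    by (simp add: mf_simp power2_eq_square algebra_simps)
  have e: "E q - 2 * (F q)\<^sup>2 + G q * (F q)\<^sup>2 \<ge> 0" using assms[rule_format, of "(1, - F q)"]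
    by (simp add: mf_simp power2_eq_square algebra_simps)
  have "E q * G q - (F q)\<^sup>2 \<ge> 0"
  proof (cases "E q > 0 \<or> G q > 0")
    case True then show ?thesis using c d
      by (meson zero_le_mult_iff not_less)
  next
    case False
    then have "E q = 0" "G q = 0" using a b by auto
    then show ?thesis using e by (simp add: power2_eq_square)
  qed
  then show ?thesis using a b by simp
qed

lemma sing_iff:
  assumes "\<forall>w. metric_form E F G q w w \<ge> 0"
  shows "singular_point E F G q \<longleftrightarrow> E q * G q - (F q)\<^sup>2 = 0"
proof
  assume s: "singular_point E F G q"
  show "E q * G q - (F q)\<^sup>2 = 0"
  proof (rule ccontr)
    assume ne: "E q * G q - (F q)\<^sup>2 \<noteq> 0"
    with psd_pt[OF assms] have pos: "E q * G q - (F q)\<^sup>2 > 0" "E q \<ge> 0" by auto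
    then have Ep: "E q > 0" by (smt (verit) zero_le_power2 mult_nonneg_nonneg mult_eq_0_iff)
    from s obtain w where w: "w \<noteq> 0" "metric_form E F G q w w \<le> 0"
      unfolding singular_point_def by (auto simp: not_less)
    obtain x y where xy: "w = (x,y)" by (cases w)
    have "E q * metric_form E F G q w w = (E q * x + F q * y)\<^sup>2 + (E q * G q - (F q)\<^sup>2) * y\<^sup>2"
      by (simp add: xy mf_simp power2_eq_square algebra_simps)
    moreover have "E q * metric_form E F G q w w \<le> 0" using w(2) Ep by (simp add: mult_nonneg_nonpos)
    ultimately have "y = 0" "E q * x + F q * y = 0"
      using pos by (smt (verit) zero_le_power2 mult_pos_pos power2_less_0 mult_nonneg_nonneg power_eq_0_iff mult_eq_0_iff)+
    then have "x = 0" using Ep by simp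
    with \<open>y = 0\<close> xy w(1) show False by (simp add: zero_prod_def)
  qed
next
  assume d: "E q * G q - (F q)\<^sup>2 = 0"
  show "singular_point E F G q"
  proof (cases "E q = 0")
    case True
    then have "F q = 0" using d by simp
    then have "metric_form E F G q (1,0) (1,0) = 0" using True by (simp add: mf_simp)
    moreover have "(1::real,0::real) \<noteq> 0" by (simp add: zero_prod_def)
    ultimately show ?thesis unfolding singular_point_def by force
  next
    case False
    have "metric_form E F G q (F q, - E q) (F q, - E q) = 0"
      using d by (simp add: mf_simp power2_eq_square algebra_simps)
    moreover have "(F q, - E q) \<noteq> 0" using False by (simp add: zero_prod_def)
    ultimately show ?thesis unfolding singular_point_def by force
  qed
qed

lemma null_dim:
  assumes d: "E q * G q - (F q)\<^sup>2 = 0" and nz: "\<not> (E q = 0 \<and> F q = 0 \<and> G q = 0)"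
  shows "dim (null_space E F G q) = 1"
proof (cases "E q = 0")
  case False
  have "null_space E F G q = span {(F q, - E q)}"
  proof (intro set_eqI iffI)
    fix v assume "v \<in> null_space E F G q"
    then have h: "metric_form E F G q v (1,0) = 0" by (simp add: null_space_def)
    obtain x y where v: "v = (x,y)" by (cases v)
    from h have "E q * x + F q * y = 0" by (simp add: v mf_simp)
    then have "v = (- y / E q) *\<^sub>R (F q, - E q)" using False
      by (simp add: v field_simps)
    then show "v \<in> span {(F q, - E q)}" by (metis span_base span_scale singletonI)
  next
    fix v assume "v \<in> span {(F q, - E q)}"
    then obtain c where v: "v = c *\<^sub>R (F q, - E q)" by (auto simp: span_singleton)
    show "v \<in> null_space E F G q" unfolding null_space_def
    proof (intro CollectI allI)
      fix w :: "real \<times> real"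
      obtain a b where w: "w = (a,b)" by (cases w)
      have "F q * F q = E q * G q" using d by (simp add: power2_eq_square)
      then show "metric_form E F G q v w = 0"
        by (simp add: v w mf_simp algebra_simps)
    qed
  qed
  then show ?thesis using False by (simp add: zero_prod_def)
next
  case True
  then have F0: "F q = 0" using d by simp
  with True nz have G0: "G q \<noteq> 0" by simp
  have "null_space E F G q = span {(1,0)}"
  proof (intro set_eqI iffI)
    fix v assume "v \<in> null_space E F G q"
    then have h: "metric_form E F G q v (0,1) = 0" by (simp add: null_space_def)
    obtain x y where v: "v = (x,y)" by (cases v)
    from h have "y = 0" using True F0 G0 by (simp add: v mf_simp)
    then have "v = x *\<^sub>R (1,0)" by (simp add: v)
    then show "v \<in> span {(1::real,0::real)}" by (metis span_base span_scale singletonI)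
  next
    fix v assume "v \<in> span {(1::real,0::real)}"
    then obtain c where v: "v = c *\<^sub>R (1,0)" by (auto simp: span_singleton)
    show "v \<in> null_space E F G q" unfolding null_space_def
      by (auto simp: v mf_simp True F0)
  qed
  then show ?thesis by (simp add: zero_prod_def)
qed

lemma lin2:
  fixes L :: "real \<times> real \<Rightarrow> 'b::real_vector"
  assumes "linear L"
  shows "L (x,y) = x *\<^sub>R L (1,0) + y *\<^sub>R L (0,1)"
proof -
  have "(x,y) = x *\<^sub>R (1::real,0::real) + y *\<^sub>R (0,1)" by simp
  then have "L (x,y) = L (x *\<^sub>R (1,0) + y *\<^sub>R (0,1))" by metis
  also have "\<dots> = x *\<^sub>R L (1,0) + y *\<^sub>R L (0,1)"
    by (simp only: linear_add[OF assms] linear_scale[OF assms])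
  finally show ?thesis .
qed

lemma line_deriv_u:
  fixes f :: "real \<times> real \<Rightarrow> real"
  assumes "f differentiable at (x+t, y)"
  shows "((\<lambda>s. f (x+s, y)) has_real_derivative partial_u f (x+t,y)) (at t)"
proof -
  have f: "(f has_derivative frechet_derivative f (at (x+t,y))) (at (x+t,y))"
    using assms frechet_derivative_works by blast
  have "((\<lambda>s. x + s) has_derivative (\<lambda>h. h)) (at t)"
    using has_derivative_add[OF has_derivative_const has_derivative_ident] by simp
  then have g: "((\<lambda>s. (x+s, y)) has_derivative (\<lambda>s. (s, 0))) (at t)"
    using has_derivative_Pair[OF _ has_derivative_const] by blast
  have "((\<lambda>s. f (x+s, y)) has_derivative (\<lambda>s. frechet_derivative f (at (x+t,y)) (s,0))) (at t)"
    using has_derivative_compose[OF g f] .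
  moreover have lin: "linear (frechet_derivative f (at (x+t,y)))"
    using f has_derivative_linear by blast
  have "(\<lambda>s. frechet_derivative f (at (x+t,y)) (s,0)) = (\<lambda>s. partial_u f (x+t,y) * s)"
    by (rule ext) (subst lin2[OF lin], simp add: partial_u_def)
  ultimately show ?thesis by (simp add: has_field_derivative_def)
qed

lemma line_deriv_v:
  fixes f :: "real \<times> real \<Rightarrow> real"
  assumes "f differentiable at (x, y+t)"
  shows "((\<lambda>s. f (x, y+s)) has_real_derivative partial_v f (x,y+t)) (at t)"
proof -
  have f: "(f has_derivative frechet_derivative f (at (x,y+t))) (at (x,y+t))"
    using assms frechet_derivative_works by blast
  have "((\<lambda>s. y + s) has_derivative (\<lambda>h. h)) (at t)"
    using has_derivative_add[OF has_derivative_const has_derivative_ident] by simp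
  then have g: "((\<lambda>s. (x, y+s)) has_derivative (\<lambda>s. (0, s))) (at t)"
    using has_derivative_Pair[OF has_derivative_const] by blast
  have "((\<lambda>s. f (x, y+s)) has_derivative (\<lambda>s. frechet_derivative f (at (x,y+t)) (0,s))) (at t)"
    using has_derivative_compose[OF g f] .
  moreover have lin: "linear (frechet_derivative f (at (x,y+t)))"
    using f has_derivative_linear by blast
  have "(\<lambda>s. frechet_derivative f (at (x,y+t)) (0,s)) = (\<lambda>s. partial_v f (x,y+t) * s)"
    by (rule ext) (subst lin2[OF lin], simp add: partial_v_def)
  ultimately show ?thesis by (simp add: has_field_derivative_def)
qed

lemma mvt_est:
  fixes \<phi> \<phi>' :: "real \<Rightarrow> real"
  assumes h: "h > 0" and d: "\<And>t. 0 \<le> t \<Longrightarrow> t \<le> h \<Longrightarrow> (\<phi> has_real_derivative \<phi>' t) (at t)"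
    and b: "\<And>t. 0 \<le> t \<Longrightarrow> t \<le> h \<Longrightarrow> \<bar>\<phi>' t - h * c\<bar> \<le> K"
  shows "\<bar>\<phi> h - \<phi> 0 - h * (h * c)\<bar> \<le> h * K"
proof -
  obtain z where z: "0 < z" "z < h" "\<phi> h - \<phi> 0 = (h - 0) * \<phi>' z"
    using MVT2[OF h d] by auto
  have "\<bar>\<phi> h - \<phi> 0 - h * (h * c)\<bar> = h * \<bar>\<phi>' z - h * c\<bar>"
    using z h by (simp add: abs_mult right_diff_distrib[symmetric])
  also have "\<dots> \<le> h * K" using b[of z] z h by (simp add: mult_left_mono)
  finally show ?thesis .
qed

lemma mixed_sym_eps:
  fixes f :: "real \<times> real \<Rightarrow> real"
  assumes S: "open S" "(p1,p2) \<in> S" and df: "\<And>q. q \<in> S \<Longrightarrow> f differentiable at q"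
    and hA: "(partial_u f has_derivative A) (at (p1,p2))"
    and hB: "(partial_v f has_derivative B) (at (p1,p2))"
    and e: "\<epsilon> > 0"
  shows "\<bar>A (0,1) - B (1,0)\<bar> \<le> 8 * \<epsilon>"
proof -
  let ?p = "(p1,p2)"
  have linA: "linear A" using hA has_derivative_linear by blast
  have linB: "linear B" using hB has_derivative_linear by blast
  obtain d1 where d1: "d1 > 0" "\<And>y. norm (y - ?p) < d1 \<Longrightarrow>
      \<bar>partial_u f y - partial_u f ?p - A (y - ?p)\<bar> \<le> \<epsilon> * norm (y - ?p)"
    using hA e unfolding has_derivative_at_alt by (metis real_norm_def)
  obtain d2 where d2: "d2 > 0" "\<And>y. norm (y - ?p) < d2 \<Longrightarrow>
      \<bar>partial_v f y - partial_v f ?p - B (y - ?p)\<bar> \<le> \<epsilon> * norm (y - ?p)"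
    using hB e unfolding has_derivative_at_alt by (metis real_norm_def)
  obtain r where r: "r > 0" "ball ?p r \<subseteq> S" using S open_contains_ball by blast
  define h where "h = min d1 (min d2 r) / 3"
  have h0: "h > 0" using d1 d2 r by (simp add: h_def)
  have nb: "norm ((p1+t, p2+s) - ?p) \<le> 2*h" if "0 \<le> t" "t \<le> h" "0 \<le> s" "s \<le> h" for t s
  proof -
    have "norm ((p1+t, p2+s) - ?p) = norm (t,s)" by simp
    also have "\<dots> \<le> norm t + norm s" by (rule norm_Pair_le)
    also have "\<dots> \<le> 2*h" using that by simp
    finally show ?thesis .
  qed
  have hd: "2*h < d1" "2*h < d2" "2*h < r" using h0 by (auto simp: h_def)
  have inS: "(p1+t, p2+s) \<in> S" if "0 \<le> t" "t \<le> h" "0 \<le> s" "s \<le> h" for t s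
  proof -
    have "dist (p1+t, p2+s) ?p < r"
      using nb[OF that] hd by (simp only: dist_norm)
    then have "dist ?p (p1+t, p2+s) < r" by (simp add: dist_commute)
    then show ?thesis using r by auto
  qed
  have ea: "\<bar>partial_u f (p1+t,p2+s) - partial_u f ?p - A (t,s)\<bar> \<le> \<epsilon> * (2*h)"
    if "0 \<le> t" "t \<le> h" "0 \<le> s" "s \<le> h" for t s
  proof -
    have "\<bar>partial_u f (p1+t,p2+s) - partial_u f ?p - A ((p1+t,p2+s) - ?p)\<bar> \<le> \<epsilon> * norm ((p1+t,p2+s) - ?p)"
      using nb[OF that] hd by (intro d1(2)) linarith
    also have "\<dots> \<le> \<epsilon> * (2*h)" using nb[OF that] e by (simp add: mult_left_mono)
    finally show ?thesis by simp
  qed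
  have eb: "\<bar>partial_v f (p1+t,p2+s) - partial_v f ?p - B (t,s)\<bar> \<le> \<epsilon> * (2*h)"
    if "0 \<le> t" "t \<le> h" "0 \<le> s" "s \<le> h" for t s
  proof -
    have "\<bar>partial_v f (p1+t,p2+s) - partial_v f ?p - B ((p1+t,p2+s) - ?p)\<bar> \<le> \<epsilon> * norm ((p1+t,p2+s) - ?p)"
      using nb[OF that] hd by (intro d2(2)) linarith
    also have "\<dots> \<le> \<epsilon> * (2*h)" using nb[OF that] e by (simp add: mult_left_mono)
    finally show ?thesis by simp
  qed
  define \<Delta> where "\<Delta> = f (p1+h,p2+h) - f (p1+h,p2) - f (p1,p2+h) + f (p1,p2)"
  have 1: "\<bar>\<Delta> - h * (h * A (0,1))\<bar> \<le> h * (4 * \<epsilon> * h)"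
  proof -
    have "\<bar>(\<lambda>t. f (p1+t,p2+h) - f (p1+t,p2)) h - (\<lambda>t. f (p1+t,p2+h) - f (p1+t,p2)) 0 - h * (h * A (0,1))\<bar>
          \<le> h * (4 * \<epsilon> * h)"
    proof (rule mvt_est[OF h0])
      fix t assume t: "0 \<le> t" "t \<le> h"
      have "((\<lambda>s. f (p1+s, p2+h)) has_real_derivative partial_u f (p1+t,p2+h)) (at t)"
        using line_deriv_u df inS t h0 by simp
      moreover have "((\<lambda>s. f (p1+s, p2)) has_real_derivative partial_u f (p1+t,p2)) (at t)"
        using line_deriv_u[of f p1 t p2] df inS[of t 0] t h0 by simp
      ultimately show "((\<lambda>t. f (p1+t,p2+h) - f (p1+t,p2)) has_real_derivative
              partial_u f (p1+t,p2+h) - partial_u f (p1+t,p2)) (at t)"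
        by (rule DERIV_diff)
      have l: "A (t,h) - A (t,0) = h * A (0,1)"
        by (subst lin2[OF linA], subst (2) lin2[OF linA]) simp
      have "\<bar>partial_u f (p1+t,p2+h) - partial_u f ?p - A (t,h)\<bar> \<le> \<epsilon> * (2*h)"
        using ea t h0 by simp
      moreover have "\<bar>partial_u f (p1+t,p2+0) - partial_u f ?p - A (t,0)\<bar> \<le> \<epsilon> * (2*h)"
        using ea[of t 0] t h0 by simp
      ultimately show "\<bar>partial_u f (p1+t,p2+h) - partial_u f (p1+t,p2) - h * A (0,1)\<bar> \<le> 4 * \<epsilon> * h"
        using l by simp
    qed
    then show ?thesis by (simp add: \<Delta>_def)
  qed
  have 2: "\<bar>\<Delta> - h * (h * B (1,0))\<bar> \<le> h * (4 * \<epsilon> * h)"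
  proof -
    have "\<bar>(\<lambda>s. f (p1+h,p2+s) - f (p1,p2+s)) h - (\<lambda>s. f (p1+h,p2+s) - f (p1,p2+s)) 0 - h * (h * B (1,0))\<bar>
          \<le> h * (4 * \<epsilon> * h)"
    proof (rule mvt_est[OF h0])
      fix t assume t: "0 \<le> t" "t \<le> h"
      have "((\<lambda>s. f (p1+h, p2+s)) has_real_derivative partial_v f (p1+h,p2+t)) (at t)"
        using line_deriv_v df inS t h0 by simp
      moreover have "((\<lambda>s. f (p1, p2+s)) has_real_derivative partial_v f (p1,p2+t)) (at t)"
        using line_deriv_v[of f p1 p2 t] df inS[of 0 t] t h0 by simp
      ultimately show "((\<lambda>s. f (p1+h,p2+s) - f (p1,p2+s)) has_real_derivative
              partial_v f (p1+h,p2+t) - partial_v f (p1,p2+t)) (at t)"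
        by (rule DERIV_diff)
      have l: "B (h,t) - B (0,t) = h * B (1,0)"
        by (subst lin2[OF linB], subst (2) lin2[OF linB]) simp
      have "\<bar>partial_v f (p1+h,p2+t) - partial_v f ?p - B (h,t)\<bar> \<le> \<epsilon> * (2*h)"
        using eb t h0 by simp
      moreover have "\<bar>partial_v f (p1+0,p2+t) - partial_v f ?p - B (0,t)\<bar> \<le> \<epsilon> * (2*h)"
        using eb[of 0 t] t h0 by simp
      ultimately show "\<bar>partial_v f (p1+h,p2+t) - partial_v f (p1,p2+t) - h * B (1,0)\<bar> \<le> 4 * \<epsilon> * h"
        using l by simp
    qed
    then show ?thesis by (simp add: \<Delta>_def)
  qed
  have "\<bar>h * (h * (A (0,1) - B (1,0)))\<bar> \<le> h * (8 * \<epsilon> * h)"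
    using 1 2 by (simp add: algebra_simps abs_le_iff) 
  moreover have "\<bar>h * (h * (A (0,1) - B (1,0)))\<bar> = (h * h) * \<bar>A (0,1) - B (1,0)\<bar>"
    using h0 by (simp add: abs_mult)
  moreover have "h * (8 * \<epsilon> * h) = (h * h) * (8 * \<epsilon>)" by simp
  ultimately have "(h * h) * \<bar>A (0,1) - B (1,0)\<bar> \<le> (h * h) * (8 * \<epsilon>)" by simp
  moreover have "h * h > 0" using h0 by simp
  ultimately show ?thesis by (simp add: mult_le_cancel_left_pos)
qed

lemma mixed_sym:
  fixes f :: "real \<times> real \<Rightarrow> real"
  assumes S: "open S" "p \<in> S" and df: "\<And>q. q \<in> S \<Longrightarrow> f differentiable at q"
    and da: "partial_u f differentiable at p" and db: "partial_v f differentiable at p"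
  shows "partial_v (partial_u f) p = partial_u (partial_v f) p"
proof -
  obtain p1 p2 where p: "p = (p1,p2)" by (cases p)
  define A where "A = frechet_derivative (partial_u f) (at p)"
  define B where "B = frechet_derivative (partial_v f) (at p)"
  have hA: "(partial_u f has_derivative A) (at (p1,p2))"
    using da frechet_derivative_works A_def p by blast
  have hB: "(partial_v f has_derivative B) (at (p1,p2))"
    using db frechet_derivative_works B_def p by blast
  have all: "\<bar>A (0,1) - B (1,0)\<bar> \<le> 8 * e" if "e > 0" for e
    using mixed_sym_eps[OF S(1) _ df hA hB that] S(2) p by blast
  have "A (0,1) = B (1,0)"
  proof (rule ccontr)
    assume "A (0,1) \<noteq> B (1,0)"
    then have "\<bar>A (0,1) - B (1,0)\<bar> > 0" by simp
    from all[of "\<bar>A (0,1) - B (1,0)\<bar> / 16"] this show False by simp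
  qed
  then show ?thesis by (simp add: partial_u_def partial_v_def A_def B_def)
qed

lemma smooth_C2:
  assumes "smooth_on U f" "open U" "q \<in> U"
  shows "f differentiable at q" "(\<lambda>q. frechet_derivative f (at q) w) differentiable at q"
proof -
  have "C_k_on (Suc (Suc 0)) U f" using assms(1) smooth_on_def by blast
  then have "f differentiable_on U" "(\<lambda>q. frechet_derivative f (at q) w) differentiable_on U"
    by (simp_all only: C_k_on.simps)
  then show "f differentiable at q" "(\<lambda>q. frechet_derivative f (at q) w) differentiable at q"
    using assms(2,3) differentiable_on_eq_differentiable_at by blast+
qed

lemma local_min_zero:
  fixes f :: "real \<times> real \<Rightarrow> real"
  assumes "open U" "q \<in> U" "\<forall>y\<in>U. f y \<ge> 0" "f q = 0" "(f has_derivative f') (at q)"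
  shows "f' = (\<lambda>h. 0)"
proof (rule has_derivative_local_min[OF assms(5)])
  show "eventually (\<lambda>y. f q \<le> f y) (at q)"
    unfolding eventually_at_topological using assms by auto
qed

lemma dpart:
  assumes "smooth_on U f" "open U" "q \<in> U"
  shows "(f has_derivative frechet_derivative f (at q)) (at q)"
    "(partial_u f has_derivative frechet_derivative (partial_u f) (at q)) (at q)"
    "(partial_v f has_derivative frechet_derivative (partial_v f) (at q)) (at q)"
proof -
  have pu: "partial_u f = (\<lambda>q. frechet_derivative f (at q) (1,0))" by (rule ext) (simp add: partial_u_def)
  have pv: "partial_v f = (\<lambda>q. frechet_derivative f (at q) (0,1))" by (rule ext) (simp add: partial_v_def)
  show "(f has_derivative frechet_derivative f (at q)) (at q)"
    using smooth_C2(1)[OF assms] frechet_derivative_works by blast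
  show "(partial_u f has_derivative frechet_derivative (partial_u f) (at q)) (at q)"
    using smooth_C2(2)[OF assms, of "(1,0)"] frechet_derivative_works pu by metis
  show "(partial_v f has_derivative frechet_derivative (partial_v f) (at q)) (at q)"
    using smooth_C2(2)[OF assms, of "(0,1)"] frechet_derivative_works pv by metis
qed

lemma delta_deriv:
  fixes E F G :: "real \<times> real \<Rightarrow> real"
  assumes sE: "smooth_on U E" and sF: "smooth_on U F" and sG: "smooth_on U G"
    and U: "open U" "q \<in> U"
  defines "\<delta> \<equiv> (\<lambda>q. E q * G q - (F q)\<^sup>2)"
  shows "(\<delta> has_derivative (\<lambda>h. E q * frechet_derivative G (at q) h + frechet_derivative E (at q) h * G q
        - (F q * frechet_derivative F (at q) h + frechet_derivative F (at q) h * F q))) (at q)"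
proof -
  have e: "\<delta> = (\<lambda>q. E q * G q - F q * F q)" by (rule ext) (simp add: \<delta>_def power2_eq_square)
  show ?thesis unfolding e
    by (rule has_derivative_diff[OF has_derivative_mult[OF dpart(1)[OF sE U] dpart(1)[OF sG U]]
          has_derivative_mult[OF dpart(1)[OF sF U] dpart(1)[OF sF U]]])
qed

lemma delta_partials:
  fixes E F G :: "real \<times> real \<Rightarrow> real"
  assumes sE: "smooth_on U E" and sF: "smooth_on U F" and sG: "smooth_on U G"
    and U: "open U" "q \<in> U"
  defines "\<delta> \<equiv> (\<lambda>q. E q * G q - (F q)\<^sup>2)"
  shows "partial_u \<delta> q = E q * partial_u G q + partial_u E q * G q - (F q * partial_u F q + partial_u F q * F q)"
    "partial_v \<delta> q = E q * partial_v G q + partial_v E q * G q - (F q * partial_v F q + partial_v F q * F q)"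
proof -
  note d = frechet_derivative_at[OF delta_deriv[OF sE sF sG U], folded \<delta>_def]
  show "partial_u \<delta> q = E q * partial_u G q + partial_u E q * G q - (F q * partial_u F q + partial_u F q * F q)"
    unfolding partial_u_def d[symmetric] by simp
  show "partial_v \<delta> q = E q * partial_v G q + partial_v E q * G q - (F q * partial_v F q + partial_v F q * F q)"
    unfolding partial_v_def d[symmetric] by simp
qed

lemma delta_u_deriv:
  fixes E F G :: "real \<times> real \<Rightarrow> real"
  assumes sE: "smooth_on U E" and sF: "smooth_on U F" and sG: "smooth_on U G"
    and U: "open U" "q \<in> U"
  defines "\<delta> \<equiv> (\<lambda>q. E q * G q - (F q)\<^sup>2)"
  shows "(partial_u \<delta> has_derivative (\<lambda>h.
      E q * frechet_derivative (partial_u G) (at q) h + frechet_derivative E (at q) h * partial_u G q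
      + (partial_u E q * frechet_derivative G (at q) h + frechet_derivative (partial_u E) (at q) h * G q)
      - (F q * frechet_derivative (partial_u F) (at q) h + frechet_derivative F (at q) h * partial_u F q
      + (partial_u F q * frechet_derivative F (at q) h + frechet_derivative (partial_u F) (at q) h * F q)))) (at q)"
proof -
  have "((\<lambda>q. E q * partial_u G q + partial_u E q * G q - (F q * partial_u F q + partial_u F q * F q)) has_derivative (\<lambda>h.
      E q * frechet_derivative (partial_u G) (at q) h + frechet_derivative E (at q) h * partial_u G q
      + (partial_u E q * frechet_derivative G (at q) h + frechet_derivative (partial_u E) (at q) h * G q)
      - (F q * frechet_derivative (partial_u F) (at q) h + frechet_derivative F (at q) h * partial_u F q
      + (partial_u F q * frechet_derivative F (at q) h + frechet_derivative (partial_u F) (at q) h * F q)))) (at q)"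
    by (rule has_derivative_diff[OF has_derivative_add[OF has_derivative_mult[OF dpart(1)[OF sE U] dpart(2)[OF sG U]]
          has_derivative_mult[OF dpart(2)[OF sE U] dpart(1)[OF sG U]]]
          has_derivative_add[OF has_derivative_mult[OF dpart(1)[OF sF U] dpart(2)[OF sF U]]
          has_derivative_mult[OF dpart(2)[OF sF U] dpart(1)[OF sF U]]]])
  then show ?thesis
    by (rule has_derivative_transform_within_open[OF _ U])
      (use delta_partials(1)[OF sE sF sG U(1)] in \<open>simp add: \<delta>_def\<close>)
qed

lemma delta_v_deriv:
  fixes E F G :: "real \<times> real \<Rightarrow> real"
  assumes sE: "smooth_on U E" and sF: "smooth_on U F" and sG: "smooth_on U G"
    and U: "open U" "q \<in> U"
  defines "\<delta> \<equiv> (\<lambda>q. E q * G q - (F q)\<^sup>2)"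
  shows "(partial_v \<delta> has_derivative (\<lambda>h.
      E q * frechet_derivative (partial_v G) (at q) h + frechet_derivative E (at q) h * partial_v G q
      + (partial_v E q * frechet_derivative G (at q) h + frechet_derivative (partial_v E) (at q) h * G q)
      - (F q * frechet_derivative (partial_v F) (at q) h + frechet_derivative F (at q) h * partial_v F q
      + (partial_v F q * frechet_derivative F (at q) h + frechet_derivative (partial_v F) (at q) h * F q)))) (at q)"
proof -
  have "((\<lambda>q. E q * partial_v G q + partial_v E q * G q - (F q * partial_v F q + partial_v F q * F q)) has_derivative (\<lambda>h.
      E q * frechet_derivative (partial_v G) (at q) h + frechet_derivative E (at q) h * partial_v G q
      + (partial_v E q * frechet_derivative G (at q) h + frechet_derivative (partial_v E) (at q) h * G q)
      - (F q * frechet_derivative (partial_v F) (at q) h + frechet_derivative F (at q) h * partial_v F q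
      + (partial_v F q * frechet_derivative F (at q) h + frechet_derivative (partial_v F) (at q) h * F q)))) (at q)"
    by (rule has_derivative_diff[OF has_derivative_add[OF has_derivative_mult[OF dpart(1)[OF sE U] dpart(3)[OF sG U]]
          has_derivative_mult[OF dpart(3)[OF sE U] dpart(1)[OF sG U]]]
          has_derivative_add[OF has_derivative_mult[OF dpart(1)[OF sF U] dpart(3)[OF sF U]]
          has_derivative_mult[OF dpart(3)[OF sF U] dpart(1)[OF sF U]]]])
  then show ?thesis
    by (rule has_derivative_transform_within_open[OF _ U])
      (use delta_partials(2)[OF sE sF sG U(1)] in \<open>simp add: \<delta>_def\<close>)
qed

theorem proposition4p3:
  fixes U :: "(real \<times> real) set" and E F G :: "real \<times> real \<Rightarrow> real" and p :: "real \<times> real"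
  assumes "smooth_psd_metric U E F G"
    and "admissible U E F G"
    and "intrinsic_cross_cap U E F G p"
  shows "(\<exists>e>0. \<forall>q\<in>U. q \<noteq> p \<and> dist q p < e \<longrightarrow> \<not> singular_point E F G q)
         \<and> dim (null_space E F G p) = 1"
proof -
  have U: "open U" and sE: "smooth_on U E" and sF: "smooth_on U F" and sG: "smooth_on U G"
    and psd: "\<And>q. q \<in> U \<Longrightarrow> \<forall>w. metric_form E F G q w w \<ge> 0"
    using assms(1) unfolding smooth_psd_metric_def by auto
  define \<delta> where "\<delta> = (\<lambda>q. E q * G q - (F q)\<^sup>2)"
  have pU: "p \<in> U" and sp: "singular_point E F G p"
    and H: "partial_u (partial_u \<delta>) p * partial_v (partial_v \<delta>) p - (partial_u (partial_v \<delta>) p)\<^sup>2 \<noteq> 0"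
    using assms(3) unfolding intrinsic_cross_cap_def Let_def \<delta>_def by auto
  have dnn: "\<forall>y\<in>U. \<delta> y \<ge> 0" using psd_pt[OF psd] by (simp add: \<delta>_def)
  have sing: "\<And>q. q \<in> U \<Longrightarrow> singular_point E F G q \<longleftrightarrow> \<delta> q = 0"
    using sing_iff[OF psd] by (simp add: \<delta>_def)
  have dp0: "\<delta> p = 0" using sing[OF pU] sp by simp
  note dd = delta_deriv[OF sE sF sG U, folded \<delta>_def]
  have ddiff: "\<And>q. q \<in> U \<Longrightarrow> \<delta> differentiable at q"
    using dd differentiable_def by blast
  have crit: "partial_u \<delta> q = 0 \<and> partial_v \<delta> q = 0" if "q \<in> U" "\<delta> q = 0" for q
  proof -
    have z: "frechet_derivative \<delta> (at q) = (\<lambda>h. 0)"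
      using local_min_zero[OF U that(1) dnn that(2) dd[OF that(1)]] frechet_derivative_at[OF dd[OF that(1)]]
      by simp
    then show ?thesis by (simp add: partial_u_def partial_v_def)
  qed
  define A where "A = frechet_derivative (partial_u \<delta>) (at p)"
  define B where "B = frechet_derivative (partial_v \<delta>) (at p)"
  note du = delta_u_deriv[OF sE sF sG U pU, folded \<delta>_def]
  note dv = delta_v_deriv[OF sE sF sG U pU, folded \<delta>_def]
  have hA: "(partial_u \<delta> has_derivative A) (at p)"
    using du differentiable_def frechet_derivative_works A_def by blast
  have hB: "(partial_v \<delta> has_derivative B) (at p)"
    using dv differentiable_def frechet_derivative_works B_def by blast
  have sym: "A (0,1) = B (1,0)"
    using mixed_sym[OF U pU ddiff] hA hB differentiable_def
    by (simp add: A_def B_def partial_u_def partial_v_def) blast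
  have H': "A (1,0) * B (0,1) - (B (1,0))\<^sup>2 \<noteq> 0"
    using H by (simp add: A_def B_def partial_u_def partial_v_def)
  have linA: "linear A" using hA has_derivative_linear by blast
  have linB: "linear B" using hB has_derivative_linear by blast
  define L where "L = (\<lambda>h. (A h, B h))"
  have hL: "((\<lambda>q. (partial_u \<delta> q, partial_v \<delta> q)) has_derivative L) (at p)"
    unfolding L_def by (rule has_derivative_Pair[OF hA hB])
  have linL: "linear L" using hL has_derivative_linear by blast
  have injL: "inj L"
    unfolding linear_injective_0[OF linL]
  proof (intro allI impI)
    fix z :: "real \<times> real" assume Lz: "L z = 0"
    obtain s t where z: "z = (s,t)" by (cases z)
    have e1: "s * A (1,0) + t * A (0,1) = 0" using Lz lin2[OF linA, of s t]
      by (simp add: L_def z zero_prod_def)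
    have e2: "s * B (1,0) + t * B (0,1) = 0" using Lz lin2[OF linB, of s t]
      by (simp add: L_def z zero_prod_def)
    have "s * (A (1,0) * B (0,1) - (B (1,0))\<^sup>2) = B (0,1) * (s * A (1,0) + t * A (0,1)) - B (1,0) * (s * B (1,0) + t * B (0,1))"
      using sym by (simp add: power2_eq_square algebra_simps)
    then have "s = 0" using e1 e2 H' by simp
    have "t * (A (1,0) * B (0,1) - (B (1,0))\<^sup>2) = A (1,0) * (s * B (1,0) + t * B (0,1)) - B (1,0) * (s * A (1,0) + t * A (0,1))"
      using sym by (simp add: power2_eq_square algebra_simps)
    then have "t = 0" using e1 e2 H' by simp
    show "z = 0" using \<open>s = 0\<close> \<open>t = 0\<close> z by (simp add: zero_prod_def)
  qed
  obtain c where c: "c > 0" "\<And>x. c * norm x \<le> norm (L x)"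
    using linear_inj_bounded_below_pos[OF linL injL] by blast
  obtain d where d: "d > 0" "\<And>y. norm (y - p) < d \<Longrightarrow>
     norm ((partial_u \<delta> y, partial_v \<delta> y) - (partial_u \<delta> p, partial_v \<delta> p) - L (y - p)) \<le> c/2 * norm (y - p)"
  proof -
    have "\<forall>e>0. \<exists>d>0. \<forall>y. norm (y - p) < d \<longrightarrow>
      norm ((partial_u \<delta> y, partial_v \<delta> y) - (partial_u \<delta> p, partial_v \<delta> p) - L (y - p)) \<le> e * norm (y - p)"
      using hL unfolding has_derivative_at_alt by blast
    moreover have "c/2 > 0" using c(1) by simp
    ultimately show ?thesis using that by blast
  qed
  have part1: "\<forall>q\<in>U. q \<noteq> p \<and> dist q p < d \<longrightarrow> \<not> singular_point E F G q"
  proof (intro ballI impI notI)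
    fix q assume qU: "q \<in> U" and qp: "q \<noteq> p \<and> dist q p < d" and sq: "singular_point E F G q"
    have "\<delta> q = 0" using sing[OF qU] sq by simp
    then have gq: "partial_u \<delta> q = 0 \<and> partial_v \<delta> q = 0" using crit qU by blast
    have gp: "partial_u \<delta> p = 0 \<and> partial_v \<delta> p = 0" using crit pU dp0 by blast
    have n: "norm (q - p) < d" using qp by (simp add: dist_norm)
    have "norm (L (q - p)) \<le> c/2 * norm (q - p)"
    proof -
      have X: "(partial_u \<delta> q, partial_v \<delta> q) - (partial_u \<delta> p, partial_v \<delta> p) = 0"
        using gq gp by (simp add: zero_prod_def)
      show ?thesis using d(2)[OF n] unfolding X by simp
    qed
    moreover have "c * norm (q - p) \<le> norm (L (q - p))" by (rule c(2))
    moreover have "c * norm (q - p) > 0" using qp c(1) by simp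
    ultimately show False by linarith
  qed
  have nz: "\<not> (E p = 0 \<and> F p = 0 \<and> G p = 0)"
  proof
    assume z: "E p = 0 \<and> F p = 0 \<and> G p = 0"
    have Enn: "\<forall>y\<in>U. E y \<ge> 0" and Gnn: "\<forall>y\<in>U. G y \<ge> 0" using psd_pt[OF psd] by auto
    have DE: "frechet_derivative E (at p) = (\<lambda>h. 0)"
      using local_min_zero[OF U pU Enn _ dpart(1)[OF sE U pU]] z by simp
    have DG: "frechet_derivative G (at p) = (\<lambda>h. 0)"
      using local_min_zero[OF U pU Gnn _ dpart(1)[OF sG U pU]] z by simp
    have Eu: "partial_u E p = 0" "partial_v E p = 0" "partial_u G p = 0" "partial_v G p = 0"
      using DE DG by (simp_all add: partial_u_def partial_v_def)
    have Aeq: "A h = - (2 * (partial_u F p * frechet_derivative F (at p) h))" for h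
      using frechet_derivative_at[OF du, symmetric] z DE DG Eu by (simp add: A_def)
    have Beq: "B h = - (2 * (partial_v F p * frechet_derivative F (at p) h))" for h
      using frechet_derivative_at[OF dv, symmetric] z DE DG Eu by (simp add: B_def)
    have "A (1,0) * B (0,1) - (B (1,0))\<^sup>2 = 0"
      unfolding Aeq Beq by (simp add: partial_u_def[symmetric] partial_v_def[symmetric] power2_eq_square algebra_simps)
    with H' show False by simp
  qed
  have "dim (null_space E F G p) = 1"
    using null_dim[of E p G F] dp0 nz by (simp add: \<delta>_def)
  with part1 d(1) show ?thesis by blast
qed

end
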